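(* Let $p$ be a prime and $G$ a finite Abelian $p$-group. Then $\operatorname{rank}K(G\times C_p)-\operatorname{rank}K(G,C_p)=\operatorname{rank}B(G)-1$, where $\operatorname{rank}B(G)$ is the number of subgroups of $G$.
   Context: $B(\Pi)$ is the Burnside ring of a finite group $\Pi$ (for $\Pi$ Abelian, free with basis the subgroups $S\le\Pi$, corresponding to $\Pi/S$); $f_\Pi:B(\Pi)\to R_{\mathbb Q}(\Pi)$, $S\mapsto[\mathbb Q[\Pi/S]]$, and $K(\Pi)=\ker f_\Pi$ (Brauer relations). For $K\le G$ and a homomorphism $\rho:K\to C_p$, the graph is $K\times\rho=\{(k,\rho(k))\}\le G\times C_p$; $B(G,C_p)\subset B(G\times C_p)$ is spanned by all graphs, and $K(G,C_p)=K(G\times C_p)\cap B(G,C_p)$. *)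

theory Defs
  imports "HOL-Algebra.Algebra" "HOL-Computational_Algebra.Primes"
begin

text \<open>The set of subgroups of a group (the standard basis of the Burnside ring
  of an Abelian group).\<close>
definition subgroups :: "('a, 'm) monoid_scheme \<Rightarrow> 'a set set" where
  "subgroups G = {H. subgroup H G}"

text \<open>Elements of the Burnside ring B(G) (G Abelian): integer combinations of the
  basis elements G/S, S a subgroup; represented by their coefficient functions.\<close>
definition burnside :: "('a, 'm) monoid_scheme \<Rightarrow> ('a set \<Rightarrow> int) set" where
  "burnside G = {a. \<forall>S. S \<notin> subgroups G \<longrightarrow> a S = 0}"

text \<open>Character of the permutation representation Q[G/S] at g: the number of
  (left) cosets xS fixed by g.\<close>
definition perm_char :: "('a, 'm) monoid_scheme \<Rightarrow> 'a set \<Rightarrow> 'a \<Rightarrow> nat" where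
  "perm_char G S g =
     card {C \<in> (\<lambda>x. l_coset G x S) ` carrier G. l_coset G g C = C}"

text \<open>Brauer relations K(G) = ker (f_G : B(G) \<rightarrow> R_Q(G)).  Since rational
  representations are determined up to isomorphism by their characters, the
  class sum_S a_S [Q[G/S]] vanishes in R_Q(G) iff the corresponding virtual
  character vanishes.\<close>
definition brauer_relations :: "('a, 'm) monoid_scheme \<Rightarrow> ('a set \<Rightarrow> int) set" where
  "brauer_relations G = {a \<in> burnside G.
      \<forall>g \<in> carrier G. (\<Sum>S \<in> subgroups G. a S * int (perm_char G S g)) = 0}"

definition graph_subgroups ::
    "('a, 'm) monoid_scheme \<Rightarrow> ('b, 'n) monoid_scheme \<Rightarrow> ('a \<times> 'b) set set" where
  "graph_subgroups G H = {{(k, \<rho> k) | k. k \<in> K} | K \<rho>.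
      subgroup K G \<and> \<rho> \<in> hom (G\<lparr>carrier := K\<rparr>) H}"

definition burnside_graph ::
    "('a, 'm) monoid_scheme \<Rightarrow> ('b, 'n) monoid_scheme \<Rightarrow> (('a \<times> 'b) set \<Rightarrow> int) set" where
  "burnside_graph G H = {a \<in> burnside (G \<times>\<times> H).
      \<forall>S. S \<notin> graph_subgroups G H \<longrightarrow> a S = 0}"

definition brauer_relations_graph ::
    "('a, 'm) monoid_scheme \<Rightarrow> ('b, 'n) monoid_scheme \<Rightarrow> (('a \<times> 'b) set \<Rightarrow> int) set" where
  "brauer_relations_graph G H = brauer_relations (G \<times>\<times> H) \<inter> burnside_graph G H"

definition z_indep :: "('b \<Rightarrow> int) set \<Rightarrow> bool" where
  "z_indep S = (\<forall>c. (\<forall>x. (\<Sum>v\<in>S. c v * v x) = 0) \<longrightarrow> (\<forall>v\<in>S. c v = 0))"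

definition zrank :: "('b \<Rightarrow> int) set \<Rightarrow> nat" where
  "zrank K = Max {card S | S. S \<subseteq> K \<and> finite S \<and> z_indep S}"

end

theory Submission
  imports Defs
begin

definition zclosed :: "('b \<Rightarrow> int) set \<Rightarrow> bool" where
  "zclosed M = (\<forall>v\<in>M. \<forall>w\<in>M. \<forall>a b::int. (\<lambda>x. a * v x - b * w x) \<in> M)"

lemma zclosedD: "zclosed M \<Longrightarrow> v \<in> M \<Longrightarrow> w \<in> M \<Longrightarrow> (\<lambda>x. a * v x - b * w x) \<in> M"
  unfolding zclosed_def by blast

lemma z_indepD:
  assumes "z_indep S" "\<And>x. (\<Sum>u\<in>S. c u * u x) = 0" "v \<in> S"
  shows "c v = 0"
proof -
  have "(\<forall>x. (\<Sum>u\<in>S. c u * u x) = 0) \<longrightarrow> (\<forall>v\<in>S. c v = 0)"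
    using assms(1) unfolding z_indep_def by (rule spec)
  then show ?thesis using assms(2,3) by simp
qed

lemma z_indepI:
  assumes "\<And>c v. (\<And>x. (\<Sum>u\<in>S. c u * u x) = 0) \<Longrightarrow> v \<in> S \<Longrightarrow> c v = 0"
  shows "z_indep S"
  unfolding z_indep_def
proof (intro allI impI ballI)
  fix c v assume "\<forall>x. (\<Sum>u\<in>S. c u * u x) = 0" "v \<in> S"
  then show "c v = 0" using assms by simp
qed

lemma z_indep_zero_empty:
  assumes "z_indep S" "finite S" "\<forall>f\<in>S. \<forall>x. f x = 0"
  shows "S = {}"
proof (rule ccontr)
  assume "S \<noteq> {}"
  then obtain f where f: "f \<in> S" by blast
  have "(\<Sum>v\<in>S. (\<lambda>_. 1::int) v * v x) = 0" for x
    by (rule sum.neutral) (use assms(3) in simp)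
  from z_indepD[OF assms(1) this f] show False by simp
qed

lemma sum_three:
  fixes S :: "('b \<Rightarrow> int) set"
  assumes "finite S" "v \<in> S" "w \<in> S" "u \<in> S" "v \<noteq> w" "v \<noteq> u" "w \<noteq> u"
  shows "(\<Sum>z\<in>S. (if z = v then a else if z = w then b else if z = u then d else 0) * z x)
         = a * v x + b * w x + d * u x"
proof -
  have "(\<Sum>z\<in>S. (if z = v then a else if z = w then b else if z = u then d else 0) * z x)
      = (\<Sum>z\<in>{v,w,u}. (if z = v then a else if z = w then b else if z = u then d else 0) * z x)"
    by (rule sum.mono_neutral_right) (use assms in auto)
  also have "\<dots> = a * v x + b * w x + d * u x"
    using assms by (simp add: sum.insert_if)
  finally show ?thesis .
qed

lemma elim_one:
  assumes cl: "zclosed M" and SM: "S \<subseteq> M" and fin: "finite S" and ind: "z_indep S"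
  shows "\<exists>S'. S' \<subseteq> M \<and> finite S' \<and> z_indep S' \<and> (\<forall>f\<in>S'. f y = 0) \<and> card S \<le> card S' + 1"
proof (cases "\<forall>v\<in>S. v y = 0")
  case True
  then show ?thesis using assms by auto
next
  case False
  then obtain v0 where v0: "v0 \<in> S" "v0 y \<noteq> 0" by blast
  define \<phi> where "\<phi> = (\<lambda>v. (\<lambda>x. v0 y * v x - v y * v0 x))"
  define S' where "S' = \<phi> ` (S - {v0})"
  have inj: "inj_on \<phi> (S - {v0})"
  proof
    fix v w assume v: "v \<in> S - {v0}" and w: "w \<in> S - {v0}" and eq: "\<phi> v = \<phi> w"
    show "v = w"
    proof (rule ccontr)
      assume vw: "v \<noteq> w"
      define c where "c = (\<lambda>z. if z = v then v0 y else if z = w then - v0 y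
                                 else if z = v0 then w y - v y else 0)"
      have "(\<Sum>z\<in>S. c z * z x) = 0" for x
      proof -
        have "(\<Sum>z\<in>S. c z * z x) = v0 y * v x + (- v0 y) * w x + (w y - v y) * v0 x"
          unfolding c_def by (rule sum_three) (use v w vw fin v0 in auto)
        also have "\<dots> = \<phi> v x - \<phi> w x" unfolding \<phi>_def by (simp add: algebra_simps)
        also have "\<dots> = 0" using eq by simp
        finally show "(\<Sum>z\<in>S. c z * z x) = 0" .
      qed
      from z_indepD[OF ind this] v have "c v = 0" by blast
      then show False using v0 unfolding c_def by simp
    qed
  qed
  have "S' \<subseteq> M"
  proof
    fix f assume "f \<in> S'"
    then obtain v where v: "v \<in> S" "f = \<phi> v" unfolding S'_def by blast
    show "f \<in> M" unfolding v(2) \<phi>_def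
      by (rule zclosedD[OF cl]) (use v SM v0 in auto)
  qed
  moreover have "finite S'" unfolding S'_def using fin by simp
  moreover have "\<forall>f\<in>S'. f y = 0" unfolding S'_def \<phi>_def by (auto simp: mult.commute)
  moreover have "card S \<le> card S' + 1"
  proof -
    have "card S' = card (S - {v0})" unfolding S'_def using inj by (simp add: card_image)
    also have "\<dots> = card S - 1" using v0 fin by simp
    finally show ?thesis by simp
  qed
  moreover have "z_indep S'"
    unfolding z_indep_def
  proof (intro allI impI)
    fix c'
    assume h: "\<forall>x. (\<Sum>f\<in>S'. c' f * f x) = 0"
    define c where "c = (\<lambda>u. if u = v0 then - (\<Sum>z\<in>S - {v0}. c' (\<phi> z) * z y)
                              else c' (\<phi> u) * v0 y)"
    have hc: "(\<Sum>u\<in>S. c u * u x) = 0" for x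
    proof -
      have "(\<Sum>u\<in>S. c u * u x) = c v0 * v0 x + (\<Sum>u\<in>S - {v0}. c u * u x)"
        using v0 fin by (simp add: sum.remove)
      also have "(\<Sum>u\<in>S - {v0}. c u * u x) = (\<Sum>u\<in>S - {v0}. c' (\<phi> u) * v0 y * u x)"
        unfolding c_def by (rule sum.cong) auto
      also have "c v0 * v0 x = - (\<Sum>z\<in>S - {v0}. c' (\<phi> z) * z y * v0 x)"
        unfolding c_def by (simp add: sum_distrib_right)
      finally have "(\<Sum>u\<in>S. c u * u x) = (\<Sum>u\<in>S - {v0}. c' (\<phi> u) * v0 y * u x)
                    - (\<Sum>z\<in>S - {v0}. c' (\<phi> z) * z y * v0 x)" by simp
      also have "\<dots> = (\<Sum>u\<in>S - {v0}. c' (\<phi> u) * \<phi> u x)"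
        unfolding \<phi>_def sum_subtractf[symmetric] by (rule sum.cong) (auto simp: algebra_simps)
      also have "\<dots> = (\<Sum>f\<in>S'. c' f * f x)"
        unfolding S'_def using inj by (simp add: sum.reindex)
      also have "\<dots> = 0" using h by simp
      finally show "(\<Sum>u\<in>S. c u * u x) = 0" .
    qed
    have cz: "\<forall>u\<in>S. c u = 0" using z_indepD[OF ind hc] by blast
    show "\<forall>f\<in>S'. c' f = 0"
    proof
      fix f assume "f \<in> S'"
      then obtain u where u: "u \<in> S - {v0}" "f = \<phi> u" unfolding S'_def by blast
      then have "c' (\<phi> u) * v0 y = 0" using cz unfolding c_def by auto
      then show "c' f = 0" using u v0 by simp
    qed
  qed
  ultimately show ?thesis by (intro exI[of _ S']) simp
qed

lemma zclosed_Int_vanish: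
  assumes "zclosed M" shows "zclosed (M \<inter> {f. f y = 0})"
  unfolding zclosed_def
proof (intro ballI allI)
  fix v w a b assume v: "v \<in> M \<inter> {f. f y = 0}" and w: "w \<in> M \<inter> {f. f y = 0}"
  have "(\<lambda>x. a * v x - b * w x) \<in> M" using zclosedD[OF assms, of v w a b] v w by blast
  moreover have "a * v y - b * w y = 0" using v w by simp
  ultimately show "(\<lambda>x. a * v x - b * w x) \<in> M \<inter> {f. f y = 0}" by simp
qed

lemma elim_many:
  assumes "finite P"
  shows "zclosed M \<Longrightarrow> S \<subseteq> M \<Longrightarrow> finite S \<Longrightarrow> z_indep S \<Longrightarrow>
    \<exists>S'. S' \<subseteq> M \<and> finite S' \<and> z_indep S' \<and> (\<forall>f\<in>S'. \<forall>y\<in>P. f y = 0) \<and> card S \<le> card S' + card P"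
  using assms
proof (induction P arbitrary: M S rule: finite_induct)
  case empty
  show ?case
    by (rule exI[of _ S]) (use empty.prems in simp)
next
  case (insert y P)
  obtain S1 where S1: "S1 \<subseteq> M" "finite S1" "z_indep S1" "\<forall>f\<in>S1. f y = 0" "card S \<le> card S1 + 1"
    using elim_one[OF insert.prems(1-4)] by blast
  have S1': "S1 \<subseteq> M \<inter> {f. f y = 0}" using S1 by blast
  have "\<exists>S'. S' \<subseteq> M \<inter> {f. f y = 0} \<and> finite S' \<and> z_indep S' \<and> (\<forall>f\<in>S'. \<forall>y\<in>P. f y = 0)
         \<and> card S1 \<le> card S' + card P"
    by (rule insert.IH[OF zclosed_Int_vanish[OF insert.prems(1)] S1' S1(2,3)])
  then obtain S2 where S2: "S2 \<subseteq> M \<inter> {f. f y = 0}" "finite S2" "z_indep S2"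
     "\<forall>f\<in>S2. \<forall>y\<in>P. f y = 0" "card S1 \<le> card S2 + card P"
    by blast
  have c: "card S \<le> card S2 + card (insert y P)"
    using S1(5) S2(5) insert.hyps by simp
  have v: "\<forall>f\<in>S2. \<forall>z\<in>insert y P. f z = 0" using S2(1,4) by blast
  have "S2 \<subseteq> M" using S2(1) by blast
  then show ?case using S2(2,3) v c by blast
qed

lemma indep_bound:
  assumes "zclosed M" "finite Y" "\<forall>f\<in>M. \<forall>x. x \<notin> Y \<longrightarrow> f x = 0"
    "S \<subseteq> M" "finite S" "z_indep S"
  shows "card S \<le> card Y"
proof -
  obtain S' where S': "S' \<subseteq> M" "finite S'" "z_indep S'" "\<forall>f\<in>S'. \<forall>y\<in>Y. f y = 0"
    "card S \<le> card S' + card Y"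
    using elim_many[OF assms(2,1,4,5,6)] by blast
  have "\<forall>f\<in>S'. \<forall>x. f x = 0" using S' assms(3) by blast
  then have "S' = {}" using z_indep_zero_empty S' by blast
  then show ?thesis using S' by simp
qed

lemma zrank_props:
  fixes M :: "('b \<Rightarrow> int) set"
  assumes "zclosed M" "finite Y" "\<forall>f\<in>M. \<forall>x. x \<notin> Y \<longrightarrow> f x = 0"
  shows "\<forall>S. S \<subseteq> M \<and> finite S \<and> z_indep S \<longrightarrow> card S \<le> zrank M"
    and "\<exists>S. S \<subseteq> M \<and> finite S \<and> z_indep S \<and> card S = zrank M"
proof -
  let ?Z = "{card S | S. S \<subseteq> M \<and> finite S \<and> z_indep S}"
  have sub: "?Z \<subseteq> {..card Y}"
  proof
    fix n assume "n \<in> ?Z"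
    then obtain S where "n = card S" "S \<subseteq> M" "finite S" "z_indep S" by blast
    then show "n \<in> {..card Y}" using indep_bound[OF assms] by simp
  qed
  then have fz: "finite ?Z" using finite_subset by blast
  have "z_indep ({} :: ('b \<Rightarrow> int) set)" unfolding z_indep_def by simp
  then have "card ({} :: ('b \<Rightarrow> int) set) \<in> ?Z" by blast
  then have "0 \<in> ?Z" by simp
  then have ne: "?Z \<noteq> {}" by blast
  show "\<forall>S. S \<subseteq> M \<and> finite S \<and> z_indep S \<longrightarrow> card S \<le> zrank M"
    unfolding zrank_def using fz by (auto intro: Max_ge)
  have "zrank M \<in> ?Z" unfolding zrank_def using fz ne by (rule Max_in)
  then obtain S where "zrank M = card S" "S \<subseteq> M" "finite S" "z_indep S"
    unfolding mem_Collect_eq by blast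
  then show "\<exists>S. S \<subseteq> M \<and> finite S \<and> z_indep S \<and> card S = zrank M" by metis
qed

lemma abstract_rank:
  fixes M M' :: "('b \<Rightarrow> int) set" and N Y :: "'b set"
  assumes cl: "zclosed M" and fY: "finite Y" and supp: "\<forall>f\<in>M. \<forall>x. x \<notin> Y \<longrightarrow> f x = 0"
   and NY: "N \<subseteq> Y" and t0: "t0 \<in> N"
   and M'def: "M' = {f \<in> M. \<forall>T\<in>N. f T = 0}"
   and van: "\<forall>f\<in>M. (\<forall>T\<in>N - {t0}. f T = 0) \<longrightarrow> f t0 = 0"
   and ex: "\<forall>T\<in>N - {t0}. \<exists>e\<in>M. e T \<noteq> 0 \<and> (\<forall>T'\<in>N - {t0}. T' \<noteq> T \<longrightarrow> e T' = 0)"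
  shows "zrank M = zrank M' + (card N - 1)"
proof -
  have M'mem: "f \<in> M' \<longleftrightarrow> f \<in> M \<and> (\<forall>T\<in>N. f T = 0)" for f using M'def by simp
  have fN: "finite N" using NY fY finite_subset by blast
  have cN: "card (N - {t0}) = card N - 1" using t0 fN by simp
  have clM': "zclosed M'"
    unfolding zclosed_def
  proof (intro ballI allI)
    fix v w a b assume v: "v \<in> M'" and w: "w \<in> M'"
    have "(\<lambda>x. a * v x - b * w x) \<in> M" using zclosedD[OF cl, of v w a b] v w M'mem by blast
    then show "(\<lambda>x. a * v x - b * w x) \<in> M'" using v w M'mem by simp
  qed
  have suppM': "\<forall>f\<in>M'. \<forall>x. x \<notin> Y \<longrightarrow> f x = 0" using supp M'mem by blast
  note RM = zrank_props[OF cl fY supp]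
  note RM' = zrank_props[OF clM' fY suppM']
  have le: "zrank M \<le> zrank M' + (card N - 1)"
  proof -
    obtain S where S: "S \<subseteq> M" "finite S" "z_indep S" "card S = zrank M" using RM(2) by blast
    obtain S2 where S2: "S2 \<subseteq> M" "finite S2" "z_indep S2" "\<forall>f\<in>S2. \<forall>y\<in>N - {t0}. f y = 0"
      "card S \<le> card S2 + card (N - {t0})"
      using elim_many[OF finite_Diff[OF fN] cl S(1-3)] by blast
    have "S2 \<subseteq> M'"
    proof
      fix f assume f: "f \<in> S2"
      then have "f \<in> M" "\<forall>y\<in>N - {t0}. f y = 0" using S2 by auto
      moreover then have "f t0 = 0" using van by blast
      ultimately have "\<forall>T\<in>N. f T = 0" by blast
      then show "f \<in> M'" using \<open>f \<in> M\<close> M'mem by blast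
    qed
    then have "card S2 \<le> zrank M'" using RM'(1) S2 by blast
    then show ?thesis using S S2 cN by linarith
  qed
  have ge: "zrank M' + (card N - 1) \<le> zrank M"
  proof -
    obtain S' where S': "S' \<subseteq> M'" "finite S'" "z_indep S'" "card S' = zrank M'" using RM'(2) by blast
    have S'0: "\<forall>f\<in>S'. \<forall>T\<in>N. f T = 0" using S'(1) M'mem by blast
    obtain e where e: "\<forall>T\<in>N - {t0}. e T \<in> M \<and> e T T \<noteq> 0 \<and> (\<forall>T'\<in>N - {t0}. T' \<noteq> T \<longrightarrow> e T T' = 0)"
      using bchoice[OF ex[unfolded Bex_def]] by blast
    define E where "E = e ` (N - {t0})"
    have inj: "inj_on e (N - {t0})"
    proof
      fix T T' assume T: "T \<in> N - {t0}" and T': "T' \<in> N - {t0}" and eq: "e T = e T'"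
      show "T = T'"
      proof (rule ccontr)
        assume "T \<noteq> T'"
        then have "e T' T = 0" using e T T' by blast
        then have "e T T = 0" using eq by simp
        then show False using e T by blast
      qed
    qed
    have disj: "S' \<inter> E = {}"
    proof (rule ccontr)
      assume "S' \<inter> E \<noteq> {}"
      then obtain T where T: "T \<in> N - {t0}" "e T \<in> S'" unfolding E_def by blast
      then have "e T T = 0" using S'0 by blast
      then show False using e T by blast
    qed
    have fE: "finite E" unfolding E_def using fN by simp
    have EM: "E \<subseteq> M" unfolding E_def using e by blast
    have UM: "S' \<union> E \<subseteq> M" using S'(1) EM M'mem by blast
    have cU: "card (S' \<union> E) = card S' + (card N - 1)"
    proof -
      have "card (S' \<union> E) = card S' + card E" using disj S'(2) fE by (simp add: card_Un_disjoint)
      moreover have "card E = card (N - {t0})" unfolding E_def using inj by (simp add: card_image)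
      ultimately show ?thesis using cN by simp
    qed
    have indU: "z_indep (S' \<union> E)"
    proof (rule z_indepI)
      fix c v assume h: "\<And>x. (\<Sum>u\<in>S' \<union> E. c u * u x) = 0" and v: "v \<in> S' \<union> E"
      have split: "(\<Sum>u\<in>S' \<union> E. c u * u x) = (\<Sum>u\<in>S'. c u * u x) + (\<Sum>u\<in>E. c u * u x)" for x
        using disj S'(2) fE by (simp add: sum.union_disjoint)
      have cE: "c (e T) = 0" if T: "T \<in> N - {t0}" for T
      proof -
        have "(\<Sum>u\<in>S'. c u * u T) = 0"
          by (rule sum.neutral) (use S'0 T in auto)
        moreover have "(\<Sum>u\<in>E. c u * u T) = c (e T) * e T T"
        proof -
          have eTE: "e T \<in> E" unfolding E_def using T by blast
          have "(\<Sum>u\<in>E. c u * u T) = c (e T) * e T T + (\<Sum>u\<in>E - {e T}. c u * u T)"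
            using eTE fE by (simp add: sum.remove)
          moreover have "(\<Sum>u\<in>E - {e T}. c u * u T) = 0"
          proof (rule sum.neutral, rule ballI)
            fix u assume "u \<in> E - {e T}"
            then obtain T' where T': "T' \<in> N - {t0}" "u = e T'" "T' \<noteq> T" unfolding E_def by blast
            from e T'(1) have "\<forall>T''\<in>N - {t0}. T'' \<noteq> T' \<longrightarrow> e T' T'' = 0" by blast
            with T T'(3) have "e T' T = 0" by auto
            then have "u T = 0" using T'(2) by simp
            then show "c u * u T = 0" by simp
          qed
          ultimately show ?thesis by simp
        qed
        ultimately have "c (e T) * e T T = 0" using h[of T] split[of T] by simp
        then show ?thesis using e T by simp
      qed
      have "(\<Sum>u\<in>E. c u * u x) = 0" for x
        by (rule sum.neutral) (use cE in \<open>auto simp: E_def\<close>)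
      then have hS: "(\<Sum>u\<in>S'. c u * u x) = 0" for x using h[of x] split[of x] by simp
      show "c v = 0"
      proof (cases "v \<in> S'")
        case True
        from z_indepD[OF S'(3) hS True] show ?thesis .
      next
        case False
        then have "v \<in> E" using v by blast
        then show ?thesis using cE unfolding E_def by blast
      qed
    qed
    have "card (S' \<union> E) \<le> zrank M"
      using RM(1) UM S'(2) fE indU by blast
    then show ?thesis using cU S'(4) by simp
  qed
  show ?thesis using le ge by simp
qed

lemma comm_group_DirProd:
  assumes "comm_group G" "comm_group H"
  shows "comm_group (G \<times>\<times> H)"
proof -
  interpret G: comm_group G by fact
  interpret H: comm_group H by fact
  have gr: "group (G \<times>\<times> H)" by (rule DirProd_group) (unfold_locales)
  show ?thesis
  proof (rule group.group_comm_groupI[OF gr])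
    fix x y assume "x \<in> carrier (G \<times>\<times> H)" "y \<in> carrier (G \<times>\<times> H)"
    then show "x \<otimes>\<^bsub>G \<times>\<times> H\<^esub> y = y \<otimes>\<^bsub>G \<times>\<times> H\<^esub> x"
      by (auto simp: mult_DirProd' G.m_comm H.m_comm)
  qed
qed

lemma (in comm_group) perm_char_eq:
  assumes fin: "finite (carrier G)" and sub: "subgroup S G" and g: "g \<in> carrier G"
  shows "perm_char G S g * card S = (if g \<in> S then order G else 0)"
proof -
  have Ssub: "S \<subseteq> carrier G" using sub subgroup.subset by blast
  have lc: "(\<lambda>x. x <# S) ` carrier G = lcosets S" unfolding LCOSETS_def by auto
  show ?thesis
  proof (cases "g \<in> S")
    case True
    have "{C \<in> (\<lambda>x. x <# S) ` carrier G. g <# C = C} = (\<lambda>x. x <# S) ` carrier G"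
    proof (intro equalityI subsetI)
      fix C assume "C \<in> (\<lambda>x. x <# S) ` carrier G"
      then obtain x where x: "x \<in> carrier G" "C = x <# S" by blast
      have "g <# (x <# S) = (g \<otimes> x) <# S" using lcos_m_assoc[OF Ssub g x(1)] .
      also have "\<dots> = (x \<otimes> g) <# S" using x g m_comm by simp
      also have "\<dots> = x <# (g <# S)" using lcos_m_assoc[OF Ssub x(1) g] by simp
      also have "g <# S = S" using coset_join3[OF g sub True] .
      finally have "g <# C = C" using x by simp
      then show "C \<in> {C \<in> (\<lambda>x. x <# S) ` carrier G. g <# C = C}"
        using \<open>C \<in> (\<lambda>x. x <# S) ` carrier G\<close> by blast
    qed auto
    then have "perm_char G S g = card (lcosets S)"
      unfolding perm_char_def lc by simp
    then show ?thesis using l_lagrange[OF fin sub] True by simp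
  next
    case False
    have E0: "{C \<in> (\<lambda>x. x <# S) ` carrier G. g <# C = C} = {}"
    proof (rule ccontr)
      assume "{C \<in> (\<lambda>x. x <# S) ` carrier G. g <# C = C} \<noteq> {}"
      then obtain x where x: "x \<in> carrier G" "g <# (x <# S) = x <# S" by blast
      have "g \<otimes> x \<in> g <# (x <# S)"
      proof -
        have "x \<otimes> \<one> \<in> x <# S" unfolding l_coset_def using subgroup.one_closed[OF sub] by blast
        then have "g \<otimes> (x \<otimes> \<one>) \<in> g <# (x <# S)" unfolding l_coset_def by blast
        then show ?thesis using x(1) by simp
      qed
      then have "g \<otimes> x \<in> x <# S" using x(2) by simp
      then obtain s where s: "s \<in> S" "g \<otimes> x = x \<otimes> s" unfolding l_coset_def by blast
      have sc: "s \<in> carrier G" using s(1) Ssub by blast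
      have "g \<otimes> x = s \<otimes> x" using s(2) m_comm[OF x(1) sc] by simp
      then show False using r_cancel[OF _ g sc x(1)] False s(1) by blast
    qed
    have "perm_char G S g = 0" unfolding perm_char_def E0 by simp
    then show ?thesis using False by simp
  qed
qed

lemma DirProd_nat_pow:
  "(a, b) [^]\<^bsub>G \<times>\<times> H\<^esub> (n::nat) = (a [^]\<^bsub>G\<^esub> n, b [^]\<^bsub>H\<^esub> n)"
  by (induction n) auto

lemma subgroup_nat_pow_mem:
  assumes "subgroup S G" "x \<in> S"
  shows "x [^]\<^bsub>G\<^esub> (n::nat) \<in> S"
  by (induction n) (use assms subgroup.one_closed subgroup.m_closed in auto)

locale pset =
  fixes G :: "('a, 'm) monoid_scheme" and p :: nat
  assumes prime: "Factorial_Ring.prime p" and cg: "comm_group G" and finG: "finite (carrier G)"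
    and pg: "\<exists>k. card (carrier G) = p ^ k"
begin

abbreviation "Zp \<equiv> integer_mod_group p"
abbreviation "A \<equiv> G \<times>\<times> Zp"
abbreviation "e0 \<equiv> \<one>\<^bsub>G\<^esub>"

lemma p2: "p \<ge> 2" using prime prime_ge_2_nat by blast

lemma carrZp: "carrier Zp = {0..<int p}"
  using p2 by (simp add: carrier_integer_mod_group)

lemma one_Zp: "(1::int) \<in> carrier Zp" using carrZp p2 by simp

lemma grG: "group G" using cg comm_group.axioms(2) comm_group_def by blast

lemma cgA: "comm_group A" by (rule comm_group_DirProd[OF cg abelian_integer_mod_group])

lemma grA: "group A" using cgA comm_group_def by blast

lemma finA: "finite (carrier A)" using finG carrZp by simp

lemma orderA: "order A = order G * p"
  unfolding order_def using carrZp finG by (simp add: card_cartesian_product)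

lemma oA: "\<one>\<^bsub>A\<^esub> = (e0, 0)" by simp

lemma pow_o: "(e0, d) [^]\<^bsub>A\<^esub> (n::nat) = (e0, (int n * d) mod int p)"
  using DirProd_nat_pow[where G=G and H=Zp and a=e0 and b=d and n=n] monoid.nat_pow_one[OF group.is_monoid[OF grG]] by simp

lemma o_mult_in:
  assumes S: "subgroup S A" and d: "(e0, d) \<in> S"
  shows "(e0, (int n * d) mod int p) \<in> S"
  using subgroup_nat_pow_mem[OF S d, of n] pow_o by simp

lemma o_gen:
  assumes S: "subgroup S A" and d: "(e0, d) \<in> S" and dc: "d \<in> carrier Zp" and d0: "d \<noteq> 0"
  shows "(e0, 1) \<in> S"
proof -
  have dp: "0 < d" "d < int p" using dc d0 carrZp by auto
  have "\<not> int p dvd d" using dp zdvd_imp_le by fastforce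
  then have "coprime (int p) d" using prime by (intro prime_imp_coprime) simp_all
  then have g1: "gcd d (int p) = 1" by (simp add: coprime_iff_gcd_eq_1 gcd.commute)
  obtain u v where uv: "u * d + v * int p = 1" using bezout_int[of d "int p"] g1 by auto
  define n where "n = nat (u mod int p)"
  have "int n = u mod int p" unfolding n_def using p2 by simp
  then have "(int n * d) mod int p = (u * d) mod int p" by (simp add: mod_mult_left_eq)
  also have "u * d = 1 - v * int p" using uv by simp
  also have "(1 - v * int p) mod int p = (1 + (- v) * int p) mod int p" by simp
  also have "\<dots> = 1 mod int p" by (rule mod_mult_self1)
  also have "\<dots> = 1" using p2 by simp
  finally show ?thesis using o_mult_in[OF S d, of n] by simp
qed

definition t0 :: "('a \<times> int) set" where "t0 = {e0} \<times> carrier Zp"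

lemma t0_sub: "subgroup S A \<Longrightarrow> (e0, 1) \<in> S \<Longrightarrow> t0 \<subseteq> S"
proof
  fix x assume S: "subgroup S A" and o1: "(e0, 1) \<in> S" and x: "x \<in> t0"
  then obtain c where c: "x = (e0, c)" "c \<in> carrier Zp" unfolding t0_def by blast
  have "(e0, (int (nat c) * 1) mod int p) \<in> S" by (rule o_mult_in[OF S o1])
  moreover have "(int (nat c) * 1) mod int p = c" using c carrZp by simp
  ultimately show "x \<in> S" using c by simp
qed

lemma t0_subgroup: "subgroup t0 A"
  unfolding t0_def
  by (rule DirProd_subgroups[OF grG group.triv_subgroup[OF grG] group_integer_mod_group
        group.subgroup_self[OF group_integer_mod_group]])

end

context pset
begin

lemma memA: "x \<in> S \<Longrightarrow> subgroup S A \<Longrightarrow> fst x \<in> carrier G \<and> snd x \<in> carrier Zp"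
  using subgroup.subset by fastforce

lemma snd_unique:
  assumes S: "subgroup S A" and no: "(e0, 1) \<notin> S" and ac: "(a, c) \<in> S" and ac': "(a, c') \<in> S"
  shows "c = c'"
proof -
  have a: "a \<in> carrier G" and c: "c \<in> carrier Zp" and c': "c' \<in> carrier Zp"
    using memA[OF ac S] memA[OF ac' S] by auto
  have "inv\<^bsub>A\<^esub> (a, c') = (inv\<^bsub>G\<^esub> a, (- c') mod int p)"
    using inv_DirProd[OF grG group_integer_mod_group a c'] c' by simp
  moreover have "inv\<^bsub>A\<^esub> (a, c') \<in> S" using subgroup.m_inv_closed[OF S ac'] .
  ultimately have i: "(inv\<^bsub>G\<^esub> a, (- c') mod int p) \<in> S" by simp
  have eq: "(a, c) \<otimes>\<^bsub>A\<^esub> (inv\<^bsub>G\<^esub> a, (- c') mod int p) = (e0, (c - c') mod int p)"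
    using a grG by (simp add: group.r_inv mod_add_right_eq)
  have "(a, c) \<otimes>\<^bsub>A\<^esub> (inv\<^bsub>G\<^esub> a, (- c') mod int p) \<in> S"
    by (rule subgroup.m_closed[OF S ac i])
  then have d: "(e0, (c - c') mod int p) \<in> S" by (simp only: eq)
  have dc: "(c - c') mod int p \<in> carrier Zp" using carrZp p2 by simp
  have "(c - c') mod int p = 0"
    using o_gen[OF S d dc] no by blast
  then have "int p dvd (c - c')" by (simp add: dvd_eq_mod_eq_0)
  then have "c mod int p = c' mod int p" by (simp add: mod_eq_dvd_iff)
  moreover have "c mod int p = c" "c' mod int p = c'" using c c' carrZp by auto
  ultimately show ?thesis by simp
qed

lemma fst_hom: "group_hom A G fst"
proof -
  have "fst \<in> hom A G" by (rule homI) (auto simp: mult_DirProd')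
  then show ?thesis
    by (intro group_hom.intro grA grG) (simp add: group_hom_axioms_def)
qed

lemma fst_subgroup: "subgroup S A \<Longrightarrow> subgroup (fst ` S) G"
  by (rule group_hom.subgroup_img_is_subgroup[OF fst_hom])

lemma graph_of:
  assumes S: "subgroup S A" and no: "(e0, 1) \<notin> S"
  shows "S \<in> graph_subgroups G Zp"
proof -
  define K where "K = fst ` S"
  define \<rho> where "\<rho> = (\<lambda>k. THE c. (k, c) \<in> S)"
  have KG: "subgroup K G" unfolding K_def by (rule fst_subgroup[OF S])
  have rho: "(k, \<rho> k) \<in> S" if kK: "k \<in> K" for k
  proof -
    obtain c where c: "(k, c) \<in> S" using kK unfolding K_def by force
    have "\<exists>!c. (k, c) \<in> S" using c snd_unique[OF S no] by blast
    then show ?thesis unfolding \<rho>_def by (rule theI')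
  qed
  have Seq: "S = {(k, \<rho> k) | k. k \<in> K}"
  proof (intro equalityI subsetI)
    fix x assume x: "x \<in> S"
    obtain a c where ac: "x = (a, c)" by (cases x)
    have aK: "a \<in> K" unfolding K_def using x ac by force
    have "c = \<rho> a" using snd_unique[OF S no _ rho[OF aK]] x ac by simp
    then show "x \<in> {(k, \<rho> k) | k. k \<in> K}" using ac aK by blast
  next
    fix x assume "x \<in> {(k, \<rho> k) | k. k \<in> K}"
    then show "x \<in> S" using rho by blast
  qed
  have hom: "\<rho> \<in> hom (G\<lparr>carrier := K\<rparr>) Zp"
  proof (rule homI)
    fix k assume "k \<in> carrier (G\<lparr>carrier := K\<rparr>)"
    then have "k \<in> K" by simp
    then show "\<rho> k \<in> carrier Zp" using memA[OF rho S] by simp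
  next
    fix k1 k2 assume "k1 \<in> carrier (G\<lparr>carrier := K\<rparr>)" "k2 \<in> carrier (G\<lparr>carrier := K\<rparr>)"
    then have k: "k1 \<in> K" "k2 \<in> K" by simp_all
    have "(k1, \<rho> k1) \<otimes>\<^bsub>A\<^esub> (k2, \<rho> k2) \<in> S"
      using subgroup.m_closed[OF S rho[OF k(1)] rho[OF k(2)]] .
    then have m: "(k1 \<otimes>\<^bsub>G\<^esub> k2, \<rho> k1 \<otimes>\<^bsub>Zp\<^esub> \<rho> k2) \<in> S" by simp
    have "k1 \<otimes>\<^bsub>G\<^esub> k2 \<in> K" using subgroup.m_closed[OF KG k] .
    then have "\<rho> (k1 \<otimes>\<^bsub>G\<^esub> k2) = \<rho> k1 \<otimes>\<^bsub>Zp\<^esub> \<rho> k2"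
      using snd_unique[OF S no rho m] by blast
    then show "\<rho> (k1 \<otimes>\<^bsub>G\<lparr>carrier := K\<rparr>\<^esub> k2) = \<rho> k1 \<otimes>\<^bsub>Zp\<^esub> \<rho> k2" by simp
  qed
  show ?thesis unfolding graph_subgroups_def
    using Seq KG hom by blast
qed

lemma graph_no:
  assumes "S \<in> graph_subgroups G Zp" shows "(e0, 1) \<notin> S"
proof
  assume o1: "(e0, 1) \<in> S"
  obtain K \<rho> where S: "S = {(k, \<rho> k) | k. k \<in> K}" and K: "subgroup K G"
    and h: "\<rho> \<in> hom (G\<lparr>carrier := K\<rparr>) Zp"
    using assms unfolding graph_subgroups_def by blast
  have "\<rho> e0 = 1" using o1 S by auto
  moreover have "group (G\<lparr>carrier := K\<rparr>)" using subgroup.subgroup_is_group[OF K grG] .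
  then have "group_hom (G\<lparr>carrier := K\<rparr>) Zp \<rho>"
    by (intro group_hom.intro group_integer_mod_group) (simp_all add: group_hom_axioms_def h)
  then have "\<rho> \<one>\<^bsub>G\<lparr>carrier := K\<rparr>\<^esub> = \<one>\<^bsub>Zp\<^esub>" by (rule group_hom.hom_one)
  then have "\<rho> e0 = 0" by simp
  ultimately show False by simp
qed

definition Nset :: "('a \<times> int) set set" where
  "Nset = {S. subgroup S A \<and> (e0, 1) \<in> S}"

lemma t0_N: "t0 \<in> Nset"
  unfolding Nset_def t0_def using t0_subgroup one_Zp unfolding t0_def by blast

lemma N_struct:
  assumes "S \<in> Nset" shows "S = fst ` S \<times> carrier Zp"
proof (intro equalityI subsetI)
  have S: "subgroup S A" and o1: "(e0, 1) \<in> S" using assms unfolding Nset_def by auto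
  fix x assume "x \<in> S"
  then show "x \<in> fst ` S \<times> carrier Zp" using memA[OF _ S] by (cases x) force
next
  have S: "subgroup S A" and o1: "(e0, 1) \<in> S" using assms unfolding Nset_def by auto
  fix x assume x: "x \<in> fst ` S \<times> carrier Zp"
  then obtain a c b where abc: "x = (a, c)" "(a, b) \<in> S" "c \<in> carrier Zp" by force
  have b: "b \<in> carrier Zp" using memA[OF abc(2) S] by simp
  define d where "d = (c - b) mod int p"
  have "(e0, d) \<in> t0" unfolding t0_def d_def using carrZp p2 by simp
  then have "(e0, d) \<in> S" using t0_sub[OF S o1] by blast
  then have "(a, b) \<otimes>\<^bsub>A\<^esub> (e0, d) \<in> S" using subgroup.m_closed[OF S abc(2)] by blast
  moreover have "(a, b) \<otimes>\<^bsub>A\<^esub> (e0, d) = (a, c)"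
  proof -
    have a: "a \<in> carrier G" using memA[OF abc(2) S] by simp
    have "(b + d) mod int p = c mod int p" unfolding d_def by (simp add: mod_add_right_eq)
    also have "\<dots> = c" using abc(3) carrZp by simp
    finally show ?thesis using a by (simp add: monoid.r_one[OF group.is_monoid[OF grG]])
  qed
  ultimately show "x \<in> S" using abc(1) by simp
qed

lemma card_N: "card Nset = card (subgroups G)"
proof -
  have "bij_betw (\<lambda>K. K \<times> carrier Zp) (subgroups G) Nset"
  proof (rule bij_betw_imageI)
    show "inj_on (\<lambda>K. K \<times> carrier Zp) (subgroups G)"
    proof (rule inj_onI)
      fix K K' assume "K \<times> carrier Zp = K' \<times> carrier Zp"
      then show "K = K'" using Times_eq_cancel2[OF one_Zp] by blast
    qed
    show "(\<lambda>K. K \<times> carrier Zp) ` subgroups G = Nset"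
    proof (intro equalityI subsetI)
      fix S assume "S \<in> (\<lambda>K. K \<times> carrier Zp) ` subgroups G"
      then obtain K where K: "subgroup K G" "S = K \<times> carrier Zp" unfolding subgroups_def by blast
      have "subgroup S A" unfolding K(2)
        by (rule DirProd_subgroups[OF grG K(1) group_integer_mod_group
            group.subgroup_self[OF group_integer_mod_group]])
      moreover have "(e0, 1) \<in> S" using K subgroup.one_closed one_Zp by fastforce
      ultimately show "S \<in> Nset" unfolding Nset_def by blast
    next
      fix S assume S: "S \<in> Nset"
      then have "subgroup (fst ` S) G" using fst_subgroup unfolding Nset_def by blast
      then show "S \<in> (\<lambda>K. K \<times> carrier Zp) ` subgroups G"
        using N_struct[OF S] unfolding subgroups_def by blast
    qed
  qed
  then show ?thesis by (simp add: bij_betw_same_card)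
qed

end

definition ind :: "'x set \<Rightarrow> 'x \<Rightarrow> int" where
  "ind S x = (if x \<in> S then 1 else 0)"

lemma union_comb_list:
  fixes F :: "'x set set"
  assumes fin: "finite F" and cl: "\<forall>H\<in>F. \<forall>H'\<in>F. H \<inter> H' \<in> F"
  shows "length L = n \<Longrightarrow> set L \<subseteq> F \<Longrightarrow>
    \<exists>w. \<forall>x. ind (\<Union>(set L)) x = (\<Sum>H\<in>F. w H * ind H x)"
proof (induction n arbitrary: L)
  case 0
  then show ?case by (intro exI[of _ "\<lambda>_. 0"]) (simp add: ind_def)
next
  case (Suc n)
  then obtain H L' where L: "L = H # L'" by (cases L) auto
  have HF: "H \<in> F" and L'F: "set L' \<subseteq> F" using Suc.prems L by auto
  have len: "length L' = n" using Suc.prems L by simp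
  obtain w1 where w1: "\<forall>x. ind (\<Union>(set L')) x = (\<Sum>H\<in>F. w1 H * ind H x)"
    using Suc.IH[OF len L'F] by blast
  have mF: "set (map ((\<inter>) H) L') \<subseteq> F" using L'F HF cl by auto
  obtain w2 where w2: "\<forall>x. ind (\<Union>(set (map ((\<inter>) H) L'))) x = (\<Sum>H\<in>F. w2 H * ind H x)"
    using Suc.IH[OF _ mF] len by auto
  define w where "w = (\<lambda>H'. (if H' = H then 1 else 0) + w1 H' - w2 H')"
  have "ind (\<Union>(set L)) x = (\<Sum>H'\<in>F. w H' * ind H' x)" for x
  proof -
    have "ind (\<Union>(set L)) x = ind H x + ind (\<Union>(set L')) x - ind (\<Union>(set (map ((\<inter>) H) L'))) x"
      unfolding L ind_def by auto
    also have "\<dots> = (\<Sum>H'\<in>F. (if H' = H then ind H' x else 0)) + (\<Sum>H'\<in>F. w1 H' * ind H' x)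
                    - (\<Sum>H'\<in>F. w2 H' * ind H' x)"
      using w1 w2 HF fin by (simp add: sum.delta)
    also have "\<dots> = (\<Sum>H'\<in>F. (if H' = H then ind H' x else 0) + w1 H' * ind H' x - w2 H' * ind H' x)"
      by (simp add: sum.distrib sum_subtractf)
    also have "\<dots> = (\<Sum>H'\<in>F. w H' * ind H' x)"
      by (rule sum.cong) (auto simp: w_def algebra_simps)
    finally show ?thesis .
  qed
  then show ?case by blast
qed

lemma union_comb:
  fixes F :: "'x set set"
  assumes fin: "finite F" and cl: "\<forall>H\<in>F. \<forall>H'\<in>F. H \<inter> H' \<in> F"
  shows "\<exists>w. \<forall>x. ind (\<Union>F) x = (\<Sum>H\<in>F. w H * ind H x)"
proof -
  obtain L where L: "set L = F" using finite_list[OF fin] by blast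
  show ?thesis using union_comb_list[OF fin cl refl, of L] L by simp
qed

context pset
begin

lemma p_dvd_ord:
  assumes a: "a \<in> carrier G" and ne: "a \<noteq> e0"
  shows "p dvd group.ord G a"
proof -
  obtain k where k: "card (carrier G) = p ^ k" using pg by blast
  have "group.ord G a dvd p ^ k"
    using group.ord_dvd_group_order[OF grG a] k unfolding order_def by simp
  then obtain i where i: "i \<le> k" "group.ord G a = p ^ i"
    using divides_primepow_nat[OF prime] by blast
  have "i \<noteq> 0"
  proof
    assume "i = 0"
    then have "group.ord G a = 1" using i by simp
    then show False using group.ord_eq_1[OF grG a] ne by simp
  qed
  then show ?thesis using i by simp
qed

lemma cyclic_avoid:
  assumes x: "x \<in> carrier A" and ne: "fst x \<noteq> e0"
  shows "(e0, 1) \<notin> generate A {x}"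
proof
  assume "(e0, 1) \<in> generate A {x}"
  then obtain k :: nat where k: "(e0, 1) = x [^]\<^bsub>A\<^esub> k"
    using group.generate_pow_on_finite_carrier[OF grA finA x] by blast
  obtain a c where ac: "x = (a, c)" by (cases x)
  have a: "a \<in> carrier G" using x ac by simp
  have eqs: "a [^]\<^bsub>G\<^esub> k = e0" "c [^]\<^bsub>Zp\<^esub> k = 1"
    using k ac DirProd_nat_pow[where G=G and H=Zp and a=a and b=c and n=k] by auto
  have "group.ord G a dvd k" using group.pow_eq_id[OF grG a] eqs(1) by blast
  then have "p dvd k" using p_dvd_ord[OF a] ne ac dvd_trans by auto
  then have "(int k * c) mod int p = 0" by (simp add: mult.commute)
  then show False using eqs(2) by simp
qed

abbreviation "XA \<equiv> subgroups A"

lemma finX: "finite XA"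
proof -
  have "XA \<subseteq> Pow (carrier A)" unfolding subgroups_def using subgroup.subset by blast
  then show ?thesis using finA finite_subset by blast
qed

lemma N_X: "Nset \<subseteq> XA" unfolding Nset_def subgroups_def by blast

lemma perm_char_A:
  assumes "S \<in> XA" "g \<in> carrier A"
  shows "perm_char A S g * card S = (if g \<in> S then order A else 0)"
  using comm_group.perm_char_eq[OF cgA finA _ assms(2)] assms(1) unfolding subgroups_def by blast

lemma card_pos: "S \<in> XA \<Longrightarrow> card S > 0"
proof -
  assume S: "S \<in> XA"
  then have "subgroup S A" unfolding subgroups_def by blast
  then have sg: "subgroup S A" .
  have "\<one>\<^bsub>A\<^esub> \<in> S" by (rule subgroup.one_closed[OF sg])
  moreover have "finite S" using subgroup.subset[OF sg] finA by (rule finite_subset)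
  ultimately show ?thesis by (auto simp: card_gt_0_iff)
qed

lemma orderA_pos: "order A > 0"
proof -
  have "\<one>\<^bsub>A\<^esub> \<in> carrier A" by (rule monoid.one_closed[OF group.is_monoid[OF grA]])
  then show ?thesis unfolding order_def using finA card_gt_0_iff by blast
qed

end

context pset
begin

lemma eT_exists:
  assumes TN: "T \<in> Nset" and Tt0: "T \<noteq> t0"
  shows "\<exists>e\<in>brauer_relations A. e T \<noteq> 0 \<and> (\<forall>T'\<in>Nset - {t0}. T' \<noteq> T \<longrightarrow> e T' = 0)"
proof -
  have T: "subgroup T A" and o1T: "(e0, 1) \<in> T" using TN unfolding Nset_def by auto
  define F where "F = {H \<in> XA. H \<subseteq> T \<and> (e0, 1) \<notin> H}"
  have FX: "F \<subseteq> XA" unfolding F_def by blast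
  have finF: "finite F" using finite_subset[OF FX finX] .
  have clF: "\<forall>H\<in>F. \<forall>H'\<in>F. H \<inter> H' \<in> F"
    unfolding F_def subgroups_def using group.subgroups_Inter_pair[OF grA] by blast
  obtain w where w: "\<forall>x. ind (\<Union>F) x = (\<Sum>H\<in>F. w H * ind H x)"
    using union_comb[OF finF clF] by blast
  have UF: "x \<in> \<Union>F \<longleftrightarrow> x \<in> T \<and> (fst x \<noteq> e0 \<or> snd x = 0)" if x: "x \<in> carrier A" for x
  proof
    assume "x \<in> \<Union>F"
    then obtain H where H: "H \<in> F" "x \<in> H" by blast
    have Hs: "subgroup H A" "H \<subseteq> T" "(e0, 1) \<notin> H" using H(1) unfolding F_def subgroups_def by auto
    have "fst x \<noteq> e0 \<or> snd x = 0"
    proof (rule ccontr)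
      assume "\<not> (fst x \<noteq> e0 \<or> snd x = 0)"
      then have "x = (e0, snd x)" "snd x \<noteq> 0" by (cases x, simp)+
      then have "(e0, 1) \<in> H" using o_gen[OF Hs(1), of "snd x"] H(2) x by (cases x) auto
      then show False using Hs(3) by simp
    qed
    then show "x \<in> T \<and> (fst x \<noteq> e0 \<or> snd x = 0)" using H(2) Hs(2) by blast
  next
    assume h: "x \<in> T \<and> (fst x \<noteq> e0 \<or> snd x = 0)"
    show "x \<in> \<Union>F"
    proof (cases "fst x \<noteq> e0")
      case True
      let ?H = "generate A {x}"
      have "subgroup ?H A" using group.generate_is_subgroup[OF grA] x by blast
      moreover have "?H \<subseteq> T" using group.generate_subgroup_incl[OF grA _ T] h by blast
      moreover have "(e0, 1) \<notin> ?H" using cyclic_avoid[OF x True] .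
      moreover have "x \<in> ?H" by (rule generate.incl) simp
      ultimately show ?thesis unfolding F_def subgroups_def by blast
    next
      case False
      then have x1: "x = \<one>\<^bsub>A\<^esub>" using h by (cases x) simp
      have "subgroup {\<one>\<^bsub>A\<^esub>} A" by (rule group.triv_subgroup[OF grA])
      moreover have "{\<one>\<^bsub>A\<^esub>} \<subseteq> T" using subgroup.one_closed[OF T] by blast
      moreover have "(e0, 1) \<notin> {\<one>\<^bsub>A\<^esub>}" by simp
      ultimately have "{\<one>\<^bsub>A\<^esub>} \<in> F" unfolding F_def subgroups_def by blast
      then show ?thesis using x1 by blast
    qed
  qed
  have t0T: "t0 \<subseteq> T" by (rule t0_sub[OF T o1T])
  have key: "ind T x - ind t0 x + ind {\<one>\<^bsub>A\<^esub>} x - ind (\<Union>F) x = 0" if x: "x \<in> carrier A" for x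
  proof -
    obtain a c where ac: "x = (a, c)" by (cases x)
    have c: "c \<in> carrier Zp" using x ac by simp
    have t0iff: "x \<in> t0 \<longleftrightarrow> a = e0" using ac c unfolding t0_def by auto
    have oT: "\<one>\<^bsub>A\<^esub> \<in> T" using subgroup.one_closed[OF T] .
    show ?thesis
      unfolding ind_def using UF[OF x] t0iff t0T oT ac by auto
  qed
  define b where "b = (\<lambda>S. (if S = T then 1 else 0) - (if S = t0 then 1 else 0)
      + (if S = {\<one>\<^bsub>A\<^esub>} then 1 else 0) - (if S \<in> F then w S else 0) :: int)"
  define e where "e = (\<lambda>S. b S * int (card S))"
  have TX: "T \<in> XA" and t0X: "t0 \<in> XA" using TN t0_N N_X by auto
  have oX: "{\<one>\<^bsub>A\<^esub>} \<in> XA" unfolding subgroups_def using group.triv_subgroup[OF grA] by simp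
  have bsum: "(\<Sum>S\<in>XA. b S * ind S x) = 0" if x: "x \<in> carrier A" for x
  proof -
    have "(\<Sum>S\<in>XA. b S * ind S x) = (\<Sum>S\<in>XA. (if S = T then ind S x else 0))
        - (\<Sum>S\<in>XA. (if S = t0 then ind S x else 0)) + (\<Sum>S\<in>XA. (if S = {\<one>\<^bsub>A\<^esub>} then ind S x else 0))
        - (\<Sum>S\<in>XA. (if S \<in> F then w S * ind S x else 0))"
      unfolding b_def sum_subtractf[symmetric] sum.distrib[symmetric]
      by (rule sum.cong) (auto simp: algebra_simps)
    also have "(\<Sum>S\<in>XA. (if S \<in> F then w S * ind S x else 0)) = (\<Sum>S\<in>F. w S * ind S x)"
    proof -
      have "(\<Sum>S\<in>XA. (if S \<in> F then w S * ind S x else 0)) = (\<Sum>S\<in>{S \<in> XA. S \<in> F}. w S * ind S x)"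
        using finX by (simp add: sum.inter_filter)
      also have "{S \<in> XA. S \<in> F} = F" using FX by blast
      finally show ?thesis .
    qed
    also have "\<dots> = ind (\<Union>F) x" using spec[OF w, of x] by simp
    finally have "(\<Sum>S\<in>XA. b S * ind S x) = ind T x - ind t0 x + ind {\<one>\<^bsub>A\<^esub>} x - ind (\<Union>F) x"
      using TX t0X oX finX by (simp add: sum.delta)
    then show ?thesis using key[OF x] by simp
  qed
  have eK: "e \<in> brauer_relations A"
    unfolding brauer_relations_def burnside_def
  proof (intro CollectI conjI allI impI ballI)
    fix S assume S: "S \<notin> subgroups A"
    have "S \<noteq> T" "S \<noteq> t0" "S \<noteq> {\<one>\<^bsub>A\<^esub>}" "S \<notin> F" using S TX t0X oX FX by blast+
    then show "e S = 0" unfolding e_def b_def by simp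
  next
    fix g assume g: "g \<in> carrier A"
    have "(\<Sum>S\<in>subgroups A. e S * int (perm_char A S g)) = (\<Sum>S\<in>XA. int (order A) * (b S * ind S g))"
    proof (rule sum.cong)
      fix S assume S: "S \<in> XA"
      have "e S * int (perm_char A S g) = b S * int (perm_char A S g * card S)"
        unfolding e_def by (simp add: algebra_simps)
      also have "\<dots> = int (order A) * (b S * ind S g)"
        unfolding perm_char_A[OF S g] ind_def by simp
      finally show "e S * int (perm_char A S g) = int (order A) * (b S * ind S g)" .
    qed simp
    also have "\<dots> = int (order A) * (\<Sum>S\<in>XA. b S * ind S g)" by (simp add: sum_distrib_left)
    also have "\<dots> = 0" using bsum[OF g] by simp
    finally show "(\<Sum>S\<in>subgroups A. e S * int (perm_char A S g)) = 0" .
  qed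
  have TF: "T \<notin> F" unfolding F_def using o1T by blast
  have T1: "T \<noteq> {\<one>\<^bsub>A\<^esub>}" using o1T by auto
  have "e T \<noteq> 0"
    unfolding e_def b_def using Tt0 TF T1 card_pos[OF TX] by simp
  moreover have "\<forall>T'\<in>Nset - {t0}. T' \<noteq> T \<longrightarrow> e T' = 0"
  proof (intro ballI impI)
    fix T' assume T': "T' \<in> Nset - {t0}" "T' \<noteq> T"
    have o1: "(e0, 1) \<in> T'" using T' unfolding Nset_def by blast
    then have "T' \<notin> F" unfolding F_def by blast
    moreover have "T' \<noteq> {\<one>\<^bsub>A\<^esub>}" using o1 by auto
    ultimately show "e T' = 0" unfolding e_def b_def using T' by simp
  qed
  ultimately show ?thesis using eK by blast
qed

end

context pset
begin

lemma K_closed: "zclosed (brauer_relations A)"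
  unfolding zclosed_def
proof (intro ballI allI)
  fix v w a b assume v: "v \<in> brauer_relations A" and w: "w \<in> brauer_relations A"
  have vb: "\<forall>S. S \<notin> subgroups A \<longrightarrow> v S = 0" "\<forall>g\<in>carrier A. (\<Sum>S\<in>subgroups A. v S * int (perm_char A S g)) = 0"
    using v unfolding brauer_relations_def burnside_def by auto
  have wb: "\<forall>S. S \<notin> subgroups A \<longrightarrow> w S = 0" "\<forall>g\<in>carrier A. (\<Sum>S\<in>subgroups A. w S * int (perm_char A S g)) = 0"
    using w unfolding brauer_relations_def burnside_def by auto
  show "(\<lambda>x. a * v x - b * w x) \<in> brauer_relations A"
    unfolding brauer_relations_def burnside_def
  proof (intro CollectI conjI allI impI ballI)
    fix S assume "S \<notin> subgroups A"
    then show "a * v S - b * w S = 0" using vb wb by simp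
  next
    fix g assume g: "g \<in> carrier A"
    have "(\<Sum>S\<in>subgroups A. (a * v S - b * w S) * int (perm_char A S g))
        = a * (\<Sum>S\<in>subgroups A. v S * int (perm_char A S g)) - b * (\<Sum>S\<in>subgroups A. w S * int (perm_char A S g))"
      by (simp add: sum_distrib_left sum_subtractf algebra_simps)
    moreover have "(\<Sum>S\<in>subgroups A. v S * int (perm_char A S g)) = 0" using vb(2) g by blast
    moreover have "(\<Sum>S\<in>subgroups A. w S * int (perm_char A S g)) = 0" using wb(2) g by blast
    ultimately show "(\<Sum>S\<in>subgroups A. (a * v S - b * w S) * int (perm_char A S g)) = 0"
      by simp
  qed
qed

lemma K_supp: "\<forall>f\<in>brauer_relations A. \<forall>x. x \<notin> XA \<longrightarrow> f x = 0"
  unfolding brauer_relations_def burnside_def by blast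

lemma K_vanish:
  "\<forall>f\<in>brauer_relations A. (\<forall>T\<in>Nset - {t0}. f T = 0) \<longrightarrow> f t0 = 0"
proof (intro ballI impI)
  fix f assume f: "f \<in> brauer_relations A" and v: "\<forall>T\<in>Nset - {t0}. f T = 0"
  define g0 where "g0 = (e0, 1::int)"
  have g0: "g0 \<in> carrier A" unfolding g0_def using one_Zp grG
    by (simp add: monoid.one_closed[OF group.is_monoid[OF grG]])
  have rel: "(\<Sum>S\<in>XA. f S * int (perm_char A S g0)) = 0"
    using f g0 unfolding brauer_relations_def by blast
  have t0X: "t0 \<in> XA" using t0_N N_X by blast
  have zero: "f S * int (perm_char A S g0) = 0" if S: "S \<in> XA - {t0}" for S
  proof (cases "g0 \<in> S")
    case True
    then have "S \<in> Nset - {t0}" using S unfolding Nset_def subgroups_def g0_def by blast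
    then show ?thesis using v by simp
  next
    case False
    have "perm_char A S g0 * card S = 0" using perm_char_A[of S g0] S g0 False by simp
    then have "perm_char A S g0 = 0" using card_pos[of S] S by simp
    then show ?thesis by simp
  qed
  have "(\<Sum>S\<in>XA. f S * int (perm_char A S g0)) = f t0 * int (perm_char A t0 g0)
        + (\<Sum>S\<in>XA - {t0}. f S * int (perm_char A S g0))"
    using t0X finX by (simp add: sum.remove)
  also have "(\<Sum>S\<in>XA - {t0}. f S * int (perm_char A S g0)) = 0"
    using zero by (simp add: sum.neutral)
  finally have "f t0 * int (perm_char A t0 g0) = 0" using rel by simp
  moreover have "perm_char A t0 g0 \<noteq> 0"
  proof
    assume "perm_char A t0 g0 = 0"
    moreover have "g0 \<in> t0" unfolding g0_def t0_def using one_Zp by simp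
    ultimately have "order A = 0" using perm_char_A[OF t0X g0] by simp
    then show False using orderA_pos by simp
  qed
  ultimately show "f t0 = 0" by simp
qed

lemma Kprime_eq:
  "brauer_relations_graph G Zp = {f \<in> brauer_relations A. \<forall>T\<in>Nset. f T = 0}"
proof (intro equalityI subsetI)
  fix f assume f: "f \<in> brauer_relations_graph G Zp"
  then have fK: "f \<in> brauer_relations A" and fg: "\<forall>S. S \<notin> graph_subgroups G Zp \<longrightarrow> f S = 0"
    unfolding brauer_relations_graph_def burnside_graph_def by auto
  have "\<forall>T\<in>Nset. f T = 0"
  proof
    fix T assume "T \<in> Nset"
    then have "T \<notin> graph_subgroups G Zp" using graph_no unfolding Nset_def by blast
    then show "f T = 0" using fg by blast
  qed
  then show "f \<in> {f \<in> brauer_relations A. \<forall>T\<in>Nset. f T = 0}" using fK by blast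
next
  fix f assume f: "f \<in> {f \<in> brauer_relations A. \<forall>T\<in>Nset. f T = 0}"
  then have fK: "f \<in> brauer_relations A" and fN: "\<forall>T\<in>Nset. f T = 0" by auto
  have fB: "f \<in> burnside A" using fK unfolding brauer_relations_def by blast
  have "\<forall>S. S \<notin> graph_subgroups G Zp \<longrightarrow> f S = 0"
  proof (intro allI impI)
    fix S assume S: "S \<notin> graph_subgroups G Zp"
    show "f S = 0"
    proof (cases "S \<in> XA")
      case False
      then show ?thesis using K_supp fK by blast
    next
      case True
      then have sg: "subgroup S A" unfolding subgroups_def by blast
      have "(e0, 1) \<in> S" using graph_of[OF sg] S by blast
      then have "S \<in> Nset" using sg unfolding Nset_def by blast
      then show ?thesis using fN by blast
    qed
  qed
  then show "f \<in> brauer_relations_graph G Zp"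
    unfolding brauer_relations_graph_def burnside_graph_def using fK fB by blast
qed

lemma main:
  "int (zrank (brauer_relations A)) - int (zrank (brauer_relations_graph G Zp))
     = int (card (subgroups G)) - 1"
proof -
  have ex: "\<forall>T\<in>Nset - {t0}. \<exists>e\<in>brauer_relations A. e T \<noteq> 0 \<and> (\<forall>T'\<in>Nset - {t0}. T' \<noteq> T \<longrightarrow> e T' = 0)"
    using eT_exists by blast
  have "zrank (brauer_relations A) = zrank (brauer_relations_graph G Zp) + (card Nset - 1)"
    by (rule abstract_rank[OF K_closed finX K_supp N_X t0_N Kprime_eq K_vanish ex])
  moreover have "card Nset \<ge> 1"
    using t0_N finite_subset[OF N_X finX] by (metis One_nat_def Suc_leI card_gt_0_iff empty_iff)
  ultimately show ?thesis using card_N by linarith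
qed

end

theorem proposition4p5:
  fixes G :: "('a, 'm) monoid_scheme" and p :: nat
  assumes "Factorial_Ring.prime p"
    and "comm_group G"
    and "finite (carrier G)"
    and "\<exists>k. card (carrier G) = p ^ k"
  shows "int (zrank (brauer_relations (G \<times>\<times> integer_mod_group p)))
           - int (zrank (brauer_relations_graph G (integer_mod_group p)))
         = int (card (subgroups G)) - 1"
proof -
  interpret pset G p by (rule pset.intro[OF assms])
  show ?thesis by (rule main)
qed

end
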